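(* Let $\Gamma=(Q,A,E,(\delta_e)_{e\in E})$ be an MEMDP, $q\in Q$, and $W$ a parity objective. Then $$\sup_{\tau\in\mathcal D(\mathrm{Strat}(Q,A))}\inf_{b\in\mathcal D(E)}\mathrm{val}^{\mathrm{pr}}_q(\Gamma,b,\tau,W)=\inf_{b\in\mathcal D(E)}\sup_{\tau\in\mathcal D(\mathrm{Strat}(Q,A))}\mathrm{val}^{\mathrm{pr}}_q(\Gamma,b,\tau,W),$$ and consequently $\sup_{\tau\in\mathcal D(\mathrm{Strat}(Q,A))}\mathrm{val}^{\mathrm{uni}}_q(\Gamma,\tau,W)=\inf_{b\in\mathcal D(E)}\mathrm{val}^{\mathrm{pr}}_q(\Gamma,b,W)$.
   Context: $\mathcal D(X)$ is the set of distributions on $X$ with countable support. An MDP $G=(Q,A,\delta)$ has finite non-empty $Q,A$ and $\delta:Q\times A\to\mathcal D(Q)$; strategies are maps $\sigma:Q\cdot(A\cdot Q)^*\to\mathcal D(A)$, $\mathrm{Strat}(Q,A)$ is their set, and $\mathbb P^\sigma_q[G,\cdot]$ is the induced probability measure on infinite runs from $q$ (infinite state sequences measured by projection). A mixed strategy is $\tau\in\mathcal D(\mathrm{Strat}(Q,A))$ (countable support), with $\mathbb P^\tau_q[G,\cdot]:=\sum_\sigma\tau(\sigma)\mathbb P^\sigma_q[G,\cdot]$. A parity objective given by $f:Q\to\mathbb N$ is the set of infinite state sequences whose maximal label seen infinitely often is even. An MEMDP is $\Gamma=(Q,A,E,(\delta_e)_{e\in E})$ with $E$ finite non-empty and each $\Gamma[e]=(Q,A,\delta_e)$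 an MDP. For a (mixed or not) strategy $\tau$: $\mathrm{val}^{\mathrm{pr}}_q(\Gamma,b,\tau,W)=\sum_e b(e)\mathbb P^\tau_q[\Gamma[e],W]$, $\mathrm{val}^{\mathrm{uni}}_q(\Gamma,\tau,W)=\min_e\mathbb P^\tau_q[\Gamma[e],W]$; $\mathrm{val}^{\mathrm{pr}}_q(\Gamma,b,W)=\sup_{\sigma\in\mathrm{Strat}(Q,A)}\mathrm{val}^{\mathrm{pr}}_q(\Gamma,b,\sigma,W)$. *)

theory Defs
  imports "HOL-Probability.Probability"
begin

text \<open>Histories Q (A Q)^* are represented as a start state together with the list
of subsequent (action, state) pairs. A strategy maps histories to distributions
on actions (pmfs have countable support).\<close>

type_synonym ('q, 'a) strat = "'q \<times> ('a \<times> 'q) list \<Rightarrow> 'a pmf"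

type_synonym ('q, 'a) trans = "'q \<Rightarrow> 'a \<Rightarrow> 'q pmf"

definition hist_prob :: "('q, 'a) strat \<Rightarrow> ('q, 'a) trans \<Rightarrow> 'q \<Rightarrow> ('a \<times> 'q) list \<Rightarrow> real" where
  "hist_prob \<sigma> \<delta> q0 h =
     (\<Prod>i<length h.
        let qi = (if i = 0 then q0 else snd (h ! (i - 1))) in
        pmf (\<sigma> (q0, take i h)) (fst (h ! i)) * pmf (\<delta> qi (fst (h ! i))) (snd (h ! i)))"

definition state_prefix_prob :: "('q, 'a::finite) strat \<Rightarrow> ('q, 'a) trans \<Rightarrow> 'q \<Rightarrow> 'q list \<Rightarrow> real" where
  "state_prefix_prob \<sigma> \<delta> q0 qs =
     (\<Sum>as \<in> {as. length as = length qs}. hist_prob \<sigma> \<delta> q0 (zip as qs))"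

definition run_measure :: "('q, 'a::finite) strat \<Rightarrow> ('q, 'a) trans \<Rightarrow> 'q \<Rightarrow> 'q stream measure" where
  "run_measure \<sigma> \<delta> q0 = (SOME M.
      sets M = sets (stream_space (count_space UNIV)) \<and> prob_space M \<and>
      (\<forall>qs. emeasure M {\<omega> \<in> space M. stake (Suc (length qs)) \<omega> = q0 # qs}
             = ennreal (state_prefix_prob \<sigma> \<delta> q0 qs)))"

definition Pr :: "('q, 'a::finite) trans \<Rightarrow> ('q, 'a) strat \<Rightarrow> 'q \<Rightarrow> 'q stream set \<Rightarrow> real" where
  "Pr \<delta> \<sigma> q W = measure (run_measure \<sigma> \<delta> q) W"

definition Pr_mixed :: "('q, 'a::finite) trans \<Rightarrow> ('q, 'a) strat pmf \<Rightarrow> 'q \<Rightarrow> 'q stream set \<Rightarrow> real" where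
  "Pr_mixed \<delta> \<tau> q W = measure_pmf.expectation \<tau> (\<lambda>\<sigma>. Pr \<delta> \<sigma> q W)"

definition parity_obj :: "('q \<Rightarrow> nat) \<Rightarrow> 'q stream set" where
  "parity_obj f = {\<omega>. even (Max {f q | q. \<exists>\<^sub>\<infinity> i. \<omega> !! i = q})}"

definition val_pr_mixed :: "('e::finite \<Rightarrow> ('q, 'a::finite) trans) \<Rightarrow> 'e pmf \<Rightarrow> ('q, 'a) strat pmf
    \<Rightarrow> 'q \<Rightarrow> 'q stream set \<Rightarrow> real" where
  "val_pr_mixed \<Gamma> b \<tau> q W = (\<Sum>e\<in>UNIV. pmf b e * Pr_mixed (\<Gamma> e) \<tau> q W)"

definition val_pr_strat :: "('e::finite \<Rightarrow> ('q, 'a::finite) trans) \<Rightarrow> 'e pmf \<Rightarrow> ('q, 'a) strat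
    \<Rightarrow> 'q \<Rightarrow> 'q stream set \<Rightarrow> real" where
  "val_pr_strat \<Gamma> b \<sigma> q W = (\<Sum>e\<in>UNIV. pmf b e * Pr (\<Gamma> e) \<sigma> q W)"

definition val_uni_mixed :: "('e::finite \<Rightarrow> ('q, 'a::finite) trans) \<Rightarrow> ('q, 'a) strat pmf
    \<Rightarrow> 'q \<Rightarrow> 'q stream set \<Rightarrow> real" where
  "val_uni_mixed \<Gamma> \<tau> q W = Min (range (\<lambda>e. Pr_mixed (\<Gamma> e) \<tau> q W))"

definition val_pr :: "('e::finite \<Rightarrow> ('q, 'a::finite) trans) \<Rightarrow> 'e pmf
    \<Rightarrow> 'q \<Rightarrow> 'q stream set \<Rightarrow> real" where
  "val_pr \<Gamma> b q W = (SUP \<sigma>. val_pr_strat \<Gamma> b \<sigma> q W)"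

end

theory Submission
  imports Defs
begin


definition lst :: "'q \<Rightarrow> ('a \<times> 'q) list \<Rightarrow> 'q" where
  "lst q0 t = (if t = [] then q0 else snd (last t))"

definition Kp :: "('q, 'a) strat \<Rightarrow> ('q, 'a) trans \<Rightarrow> 'q \<Rightarrow> ('a \<times> 'q) list \<Rightarrow> ('a \<times> 'q) pmf" where
  "Kp \<sigma> \<delta> q0 t = bind_pmf (\<sigma> (q0, t)) (\<lambda>a. map_pmf (Pair a) (\<delta> (lst q0 t) a))"

lemma pmf_Kp: "pmf (Kp \<sigma> \<delta> q0 t) (a, q') = pmf (\<sigma> (q0, t)) a * pmf (\<delta> (lst q0 t) a) q'"
proof -
  have "pmf (Kp \<sigma> \<delta> q0 t) (a, q') = measure_pmf.expectation (\<sigma> (q0, t)) (\<lambda>b. pmf (map_pmf (Pair b) (\<delta> (lst q0 t) b)) (a, q'))"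
    unfolding Kp_def by (rule pmf_bind)
  also have "\<dots> = measure_pmf.expectation (\<sigma> (q0, t)) (\<lambda>b. indicator {a} b * pmf (\<delta> (lst q0 t) a) q')"
  proof (rule Bochner_Integration.integral_cong[OF refl])
    fix b
    show "pmf (map_pmf (Pair b) (\<delta> (lst q0 t) b)) (a, q') = indicator {a} b * pmf (\<delta> (lst q0 t) a) q'"
    proof (cases "b = a")
      case True
      then show ?thesis using pmf_map_inj'[of "Pair a" "\<delta> (lst q0 t) a" q'] by (simp add: inj_on_def)
    next
      case False
      then have "(a, q') \<notin> set_pmf (map_pmf (Pair b) (\<delta> (lst q0 t) b))" by auto
      then show ?thesis using False by (simp add: set_pmf_eq)
    qed
  qed
  also have "\<dots> = pmf (\<sigma> (q0, t)) a * pmf (\<delta> (lst q0 t) a) q'"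
    by (simp add: measure_pmf_single)
  finally show ?thesis .
qed

primrec hist :: "nat \<Rightarrow> (('a \<times> 'q) list \<Rightarrow> ('a \<times> 'q)) \<Rightarrow> ('a \<times> 'q) list" where
  "hist 0 x = []"
| "hist (Suc n) x = hist n x @ [x (hist n x)]"

lemma length_hist[simp]: "length (hist n x) = n"
  by (induction n) auto

lemma take_hist: "i \<le> n \<Longrightarrow> take i (hist n x) = hist i x"
proof (induction n)
  case 0 then show ?case by simp
next
  case (Suc n)
  then show ?case
    by (cases "i = Suc n") (auto simp: take_append)
qed

lemma hist_eq_iff:
  "length H = n \<Longrightarrow> (hist n x = H) \<longleftrightarrow> (\<forall>i<n. x (take i H) = H ! i)"
proof (induction n arbitrary: H)
  case 0 then show ?case by simp
next
  case (Suc n)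
  then obtain H' c where H: "H = H' @ [c]" "length H' = n"
    by (metis length_Suc_conv_rev)
  have "(hist (Suc n) x = H) \<longleftrightarrow> hist n x = H' \<and> x H' = c"
    using H by auto
  also have "\<dots> \<longleftrightarrow> (\<forall>i<n. x (take i H') = H' ! i) \<and> x H' = c"
    using Suc.IH[OF H(2)] by (auto)
  also have "\<dots> \<longleftrightarrow> (\<forall>i<Suc n. x (take i H) = H ! i)"
    using H by (auto simp: nth_append less_Suc_eq)
  finally show ?case .
qed


definition Om :: "('q, 'a) strat \<Rightarrow> ('q, 'a) trans \<Rightarrow> 'q \<Rightarrow> (('a \<times> 'q) list \<Rightarrow> ('a \<times> 'q)) measure" where
  "Om \<sigma> \<delta> q0 = PiM UNIV (\<lambda>t. measure_pmf (Kp \<sigma> \<delta> q0 t))"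

lemma space_Om[simp]: "space (Om \<sigma> \<delta> q0) = UNIV"
  by (auto simp: Om_def space_PiM PiE_def extensional_def)

lemma prob_space_Om: "prob_space (Om \<sigma> \<delta> q0)"
  unfolding Om_def by (rule prob_space_PiM) (simp add: prob_space_measure_pmf)

lemma emeasure_hist:
  fixes \<sigma> :: "('q, 'a) strat" and H :: "('a \<times> 'q) list"
  assumes "length H = n"
  shows "emeasure (Om \<sigma> \<delta> q0) {x. hist n x = H} = ennreal (\<Prod>i<n. pmf (Kp \<sigma> \<delta> q0 (take i H)) (H ! i))"
proof -
  let ?M = "\<lambda>t. measure_pmf (Kp \<sigma> \<delta> q0 t)"
  define J where "J = (\<lambda>i. take i H) ` {..<n}"
  define A where "A = (\<lambda>t::('a \<times> 'q) list. {H ! length t})"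
  have inj: "inj_on (\<lambda>i. take i H) {..<n}"
    using assms by (intro inj_onI) (metis length_take lessThan_iff min.absorb4 order_less_imp_le)
  have set: "{x. hist n x = H} = prod_emb UNIV ?M J (Pi\<^sub>E J A)"
    using assms by (auto simp: hist_eq_iff prod_emb_def J_def A_def PiE_def extensional_def Pi_def)
  have "emeasure (Om \<sigma> \<delta> q0) {x. hist n x = H} = (\<Prod>t\<in>J. emeasure (?M t) (A t))"
    unfolding set Om_def
    by (rule emeasure_PiM_emb) (auto simp: J_def prob_space_measure_pmf)
  also have "\<dots> = (\<Prod>i<n. emeasure (?M (take i H)) (A (take i H)))"
    unfolding J_def by (rule prod.reindex[OF inj, unfolded comp_def])
  also have "\<dots> = (\<Prod>i<n. ennreal (pmf (Kp \<sigma> \<delta> q0 (take i H)) (H ! i)))"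
    using assms by (intro prod.cong refl) (simp add: A_def emeasure_pmf_single)
  also have "\<dots> = ennreal (\<Prod>i<n. pmf (Kp \<sigma> \<delta> q0 (take i H)) (H ! i))"
    by (simp add: prod_ennreal)
  finally show ?thesis .
qed


lemma hist_prob_eq:
  fixes \<sigma> :: "('q, 'a) strat" and H :: "('a \<times> 'q) list"
  assumes "length H = n"
  shows "(\<Prod>i<n. pmf (Kp \<sigma> \<delta> q0 (take i H)) (H ! i)) = hist_prob \<sigma> \<delta> q0 H"
  unfolding hist_prob_def Let_def assms[symmetric]
proof (intro prod.cong refl)
  fix i assume i: "i \<in> {..<length H}"
  have il: "i < length H" using i by simp
  have L: "lst q0 (take i H) = (if i = 0 then q0 else snd (H ! (i - 1)))"
    using il by (auto simp: lst_def last_conv_nth min_def)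
  have "H ! i = (fst (H ! i), snd (H ! i))" by simp
  then have "pmf (Kp \<sigma> \<delta> q0 (take i H)) (H ! i) = pmf (Kp \<sigma> \<delta> q0 (take i H)) (fst (H ! i), snd (H ! i))"
    by metis
  also have "\<dots> = pmf (\<sigma> (q0, take i H)) (fst (H ! i)) * pmf (\<delta> (lst q0 (take i H)) (fst (H ! i))) (snd (H ! i))"
    by (rule pmf_Kp)
  finally show "pmf (Kp \<sigma> \<delta> q0 (take i H)) (H ! i) =
     pmf (\<sigma> (q0, take i H)) (fst (H ! i)) * pmf (\<delta> (if i = 0 then q0 else snd (H ! (i - 1))) (fst (H ! i))) (snd (H ! i))"
    by (simp only: L)
qed

lemma hist_prob_nonneg: "0 \<le> hist_prob \<sigma> \<delta> q0 H"
  unfolding hist_prob_def Let_def by (intro prod_nonneg) auto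

definition path :: "'q \<Rightarrow> (('a \<times> 'q) list \<Rightarrow> ('a \<times> 'q)) \<Rightarrow> 'q stream" where
  "path q0 x = smap (\<lambda>n. lst q0 (hist n x)) nats"

lemma stake_path: "stake (Suc n) (path q0 x) = q0 # map snd (hist n x)"
proof (rule nth_equalityI)
  fix i assume "i < length (stake (Suc n) (path q0 x))"
  then have i: "i \<le> n" by simp
  have "stake (Suc n) (path q0 x) ! i = path q0 x !! i"
    using i by (intro stake_nth) simp
  also have "\<dots> = lst q0 (hist i x)"
    by (simp add: path_def)
  also have "\<dots> = (q0 # map snd (hist n x)) ! i"
  proof (cases i)
    case 0 then show ?thesis by (simp add: lst_def)
  next
    case (Suc j)
    have "hist i x = take i (hist n x)" by (rule take_hist[OF i, symmetric])
    moreover have "hist n x \<noteq> []" using Suc i by (metis length_hist list.size(3) not_less_eq_eq zero_le)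
    ultimately show ?thesis using Suc i by (simp add: lst_def last_conv_nth)
  qed
  finally show "stake (Suc n) (path q0 x) ! i = (q0 # map snd (hist n x)) ! i" .
qed simp

lemma measurable_hist:
  fixes \<sigma> :: "('q::finite, 'a::finite) strat"
  shows "hist n \<in> measurable (Om \<sigma> \<delta> q0) (count_space UNIV)"
proof (induction n)
  case 0 then show ?case by simp
next
  case (Suc n)
  have "(\<lambda>x. (\<lambda>t x. t @ [x t]) (hist n x) x) \<in> measurable (Om \<sigma> \<delta> q0) (count_space UNIV)"
  proof (rule measurable_compose_countable'[OF _ Suc])
    fix t :: "('a \<times> 'q) list"
    have "(\<lambda>x. x t) \<in> measurable (Om \<sigma> \<delta> q0) (measure_pmf (Kp \<sigma> \<delta> q0 t))"
      unfolding Om_def by (rule measurable_component_singleton) simp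
    then have "(\<lambda>x. x t) \<in> measurable (Om \<sigma> \<delta> q0) (count_space UNIV)"
      by (simp add: measurable_def)
    then show "(\<lambda>x. t @ [x t]) \<in> measurable (Om \<sigma> \<delta> q0) (count_space UNIV)"
      by (rule measurable_compose) simp
  qed simp
  then show ?case by simp
qed

lemma measurable_path:
  fixes \<sigma> :: "('q::finite, 'a::finite) strat"
  shows "path q0 \<in> measurable (Om \<sigma> \<delta> q0) (stream_space (count_space UNIV))"
proof (rule measurable_stream_space2)
  fix n
  have "(\<lambda>x. lst q0 (hist n x)) \<in> measurable (Om \<sigma> \<delta> q0) (count_space UNIV)"
    by (rule measurable_compose[OF measurable_hist]) simp
  then show "(\<lambda>x. path q0 x !! n) \<in> measurable (Om \<sigma> \<delta> q0) (count_space UNIV)"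
    by (simp add: path_def)
qed

lemma run_measure_ex:
  fixes \<sigma> :: "('q::finite, 'a::finite) strat"
  shows "\<exists>M. sets M = sets (stream_space (count_space UNIV)) \<and> prob_space M \<and>
      (\<forall>qs. emeasure M {\<omega> \<in> space M. stake (Suc (length qs)) \<omega> = q0 # qs}
             = ennreal (state_prefix_prob \<sigma> \<delta> q0 qs))"
proof (intro exI conjI allI)
  let ?M = "distr (Om \<sigma> \<delta> q0) (stream_space (count_space UNIV)) (path q0)"
  show "sets ?M = sets (stream_space (count_space UNIV))" by simp
  show "prob_space ?M"
    by (rule prob_space.prob_space_distr[OF prob_space_Om measurable_path])
  fix qs :: "'q list"
  define n where "n = length qs"
  let ?S = "{\<omega> \<in> space ?M. stake (Suc (length qs)) \<omega> = q0 # qs}"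
  have S: "?S \<in> sets (stream_space (count_space UNIV))"
    by simp
  have "emeasure ?M ?S = emeasure (Om \<sigma> \<delta> q0) (path q0 -` ?S \<inter> space (Om \<sigma> \<delta> q0))"
    by (rule emeasure_distr[OF measurable_path S])
  also have "path q0 -` ?S \<inter> space (Om \<sigma> \<delta> q0) = (\<Union>as\<in>{as. length as = length qs}. {x. hist n x = zip as qs})"
  proof -
    have "map snd (hist n x) = qs \<longleftrightarrow> (\<exists>as. length as = length qs \<and> hist n x = zip as qs)" for x
    proof
      assume "map snd (hist n x) = qs"
      then show "\<exists>as. length as = length qs \<and> hist n x = zip as qs"
        by (intro exI[of _ "map fst (hist n x)"]) (auto simp: zip_map_fst_snd)
    next
      assume "\<exists>as. length as = length qs \<and> hist n x = zip as qs"
      then show "map snd (hist n x) = qs" by auto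
    qed
    moreover have "x \<in> path q0 -` ?S \<inter> space (Om \<sigma> \<delta> q0) \<longleftrightarrow> map snd (hist n x) = qs" for x
    proof -
      have "x \<in> path q0 -` ?S \<inter> space (Om \<sigma> \<delta> q0) \<longleftrightarrow> stake (Suc n) (path q0 x) = q0 # qs"
        by (simp add: space_stream_space n_def)
      also have "\<dots> \<longleftrightarrow> map snd (hist n x) = qs"
        by (simp only: stake_path list.inject simp_thms)
      finally show ?thesis .
    qed
    ultimately show ?thesis by blast
  qed
  also have "emeasure (Om \<sigma> \<delta> q0) \<dots> = (\<Sum>as\<in>{as. length as = length qs}. emeasure (Om \<sigma> \<delta> q0) {x. hist n x = zip as qs})"
  proof (rule sum_emeasure[symmetric])
    show "(\<lambda>as. {x. hist n x = zip as qs}) ` {as. length as = length qs} \<subseteq> sets (Om \<sigma> \<delta> q0)"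
    proof safe
      fix as :: "'a list"
      have "{x. hist n x = zip as qs} = hist n -` {zip as qs} \<inter> space (Om \<sigma> \<delta> q0)" by auto
      also have "\<dots> \<in> sets (Om \<sigma> \<delta> q0)"
        by (rule measurable_sets[OF measurable_hist]) simp
      finally show "{x. hist n x = zip as qs} \<in> sets (Om \<sigma> \<delta> q0)" .
    qed
    show "disjoint_family_on (\<lambda>as. {x. hist n x = zip as qs}) {as. length as = length qs}"
      unfolding disjoint_family_on_def by (auto simp: zip_eq_conv)
    show "finite {as :: 'a list. length as = length qs}"
      using finite_lists_length_eq[of "UNIV :: 'a set"] by simp
  qed
  also have "\<dots> = (\<Sum>as\<in>{as. length as = length qs}. ennreal (hist_prob \<sigma> \<delta> q0 (zip as qs)))"
  proof (intro sum.cong refl)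
    fix as :: "'a list" assume "as \<in> {as. length as = length qs}"
    then have l: "length (zip as qs) = n" by (simp add: n_def)
    show "emeasure (Om \<sigma> \<delta> q0) {x. hist n x = zip as qs} = ennreal (hist_prob \<sigma> \<delta> q0 (zip as qs))"
      using emeasure_hist[OF l, of \<sigma> \<delta> q0] hist_prob_eq[OF l, of \<sigma> \<delta> q0] by simp
  qed
  also have "\<dots> = ennreal (state_prefix_prob \<sigma> \<delta> q0 qs)"
    unfolding state_prefix_prob_def by (rule sum_ennreal) (rule hist_prob_nonneg)
  finally show "emeasure ?M ?S = ennreal (state_prefix_prob \<sigma> \<delta> q0 qs)" .
qed

lemma prob_space_run_measure:
  fixes \<sigma> :: "('q::finite, 'a::finite) strat"
  shows "prob_space (run_measure \<sigma> \<delta> q0)"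
  using someI_ex[OF run_measure_ex[of q0 \<sigma> \<delta>]] unfolding run_measure_def by blast

lemma Pr_bounds:
  fixes \<sigma> :: "('q::finite, 'a::finite) strat"
  shows "0 \<le> Pr \<delta> \<sigma> q W" "Pr \<delta> \<sigma> q W \<le> 1"
  unfolding Pr_def using prob_space.prob_le_1[OF prob_space_run_measure] by auto



lemma sum_pmf_UNIV: "(\<Sum>e\<in>(UNIV::'e::finite set). pmf b e) = 1"
  using sum_pmf_eq_1[of UNIV b] by simp

lemma sum_ge_min:
  fixes v :: "'e::finite \<Rightarrow> real"
  shows "Min (range v) \<le> (\<Sum>e\<in>UNIV. pmf b e * v e)"
proof -
  have "(\<Sum>e\<in>UNIV. pmf b e * v e) \<ge> (\<Sum>e\<in>UNIV. pmf b e * Min (range v))"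
    by (intro sum_mono mult_left_mono) auto
  also have "(\<Sum>e\<in>UNIV. pmf b e * Min (range v)) = Min (range v)"
    by (simp add: sum_distrib_right[symmetric] sum_pmf_UNIV)
  finally show ?thesis .
qed

lemma inf_b_min:
  fixes v :: "'e::finite \<Rightarrow> real"
  shows "(INF b. \<Sum>e\<in>UNIV. pmf b e * v e) = Min (range v)"
proof (rule antisym)
  obtain e0 where e0: "v e0 = Min (range v)"
  proof -
    have "Min (range v) \<in> range v" by (rule Min_in) auto
    then show ?thesis using that by (metis rangeE)
  qed
  have bdd: "bdd_below (range (\<lambda>b. \<Sum>e\<in>UNIV. pmf b e * v e))"
    by (rule bdd_belowI2[of _ "Min (range v)"]) (rule sum_ge_min)
  have "(INF b. \<Sum>e\<in>UNIV. pmf b e * v e) \<le> (\<Sum>e\<in>UNIV. pmf (return_pmf e0) e * v e)"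
    by (rule cINF_lower[OF bdd]) simp
  also have "\<dots> = v e0"
    by (simp add: indicator_def)
  finally show "(INF b. \<Sum>e\<in>UNIV. pmf b e * v e) \<le> Min (range v)" using e0 by simp
  show "Min (range v) \<le> (INF b. \<Sum>e\<in>UNIV. pmf b e * v e)"
    by (rule cINF_greatest) (simp, rule sum_ge_min)
qed


lemma inner_vec_real: "inner (a :: real^'e) w = (\<Sum>e\<in>UNIV. a$e * w$e)"
  by (simp add: inner_vec_def)

lemma minimax_hard:
  fixes g :: "'t \<Rightarrow> 'e::finite \<Rightarrow> real"
  assumes g0: "\<And>t e. 0 \<le> g t e" and g1: "\<And>t e. g t e \<le> 1"
  and mix: "\<And>t1 t2 p. 0 \<le> p \<Longrightarrow> p \<le> 1 \<Longrightarrow> \<exists>t. \<forall>e. g t e = p * g t1 e + (1-p) * g t2 e"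
  shows "\<exists>b. \<forall>t. (\<Sum>e\<in>UNIV. pmf b e * g t e) \<le> (SUP t. Min (range (g t)))"
proof -
  define c where "c = (SUP t. Min (range (g t)))"
  have bdd: "bdd_above (range (\<lambda>t. Min (range (g t))))"
  proof (rule bdd_aboveI2[where M=1])
    fix t
    have "Min (range (g t)) \<le> g t undefined" by (rule Min_le) auto
    then show "Min (range (g t)) \<le> 1" using g1[of t undefined] by linarith
  qed
  have minc: "Min (range (g t)) \<le> c" for t
    unfolding c_def by (rule cSUP_upper[OF _ bdd]) simp
  define V where "V = range (\<lambda>t. (\<chi> e. g t e) :: real^'e)"
  define T where "T = {w :: real^'e. \<forall>e. c < w$e}"
  have convV: "convex V"
    unfolding convex_def V_def
  proof safe
    fix t1 t2 and u v :: real assume uv: "0 \<le> u" "0 \<le> v" "u + v = 1"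
    then obtain t where t: "\<forall>e. g t e = u * g t1 e + (1-u) * g t2 e"
      using mix[of u t1 t2] by auto
    have "u *\<^sub>R (\<chi> e. g t1 e) + v *\<^sub>R (\<chi> e. g t2 e) = ((\<chi> e. g t e) :: real^'e)"
      using uv t by (simp add: vec_eq_iff)
    then show "u *\<^sub>R (\<chi> e. g t1 e) + v *\<^sub>R (\<chi> e. g t2 e) \<in> range (\<lambda>t. (\<chi> e. g t e) :: real^'e)"
      by (metis rangeI)
  qed
  have convT: "convex T"
    unfolding convex_def T_def
  proof safe
    fix x y :: "real^'e" and u v :: real and e
    assume x: "\<forall>e. c < x$e" and y: "\<forall>e. c < y$e" and uv: "0 \<le> u" "0 \<le> v" "u + v = 1"
    have "u * c \<le> u * x$e" "v * c \<le> v * y$e"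
      using mult_left_mono[OF less_imp_le[OF x[rule_format]] uv(1)]
        mult_left_mono[OF less_imp_le[OF y[rule_format]] uv(2)] by auto
    moreover have "u * c < u * x$e \<or> v * c < v * y$e"
    proof (cases "u = 0")
      case True then have "v = 1" using uv by simp
      then show ?thesis using y by simp
    next
      case False then have "0 < u" using uv by simp
      then show ?thesis using x mult_strict_left_mono by blast
    qed
    ultimately have "u * c + v * c < u * x$e + v * y$e" by linarith
    then show "c < (u *\<^sub>R x + v *\<^sub>R y) $ e"
      using uv by (simp add: distrib_right[symmetric])
  qed
  have Vne: "V \<noteq> {}" unfolding V_def by simp
  have Tne: "(\<chi> e. c + 1) \<in> T" unfolding T_def by simp
  have disj: "V \<inter> T = {}"
  proof (rule ccontr)
    assume "V \<inter> T \<noteq> {}"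
    then obtain t where "\<forall>e. c < g t e" unfolding V_def T_def by auto
    then have "c < Min (range (g t))" by (subst Min_gr_iff) auto
    then show False using minc[of t] by linarith
  qed
  obtain a \<beta> where a0: "a \<noteq> 0" and aV: "\<forall>x\<in>V. inner a x \<le> \<beta>" and aT: "\<forall>x\<in>T. inner a x \<ge> \<beta>"
    using separating_hyperplane_sets[OF convV convT Vne _ disj] Tne by blast
  have anonneg: "0 \<le> a$e" for e
  proof (rule ccontr)
    assume neg: "\<not> 0 \<le> a$e"
    define A0 where "A0 = (\<Sum>i\<in>UNIV. a$i * (c + 1))"
    define K where "K = (\<bar>A0\<bar> + \<bar>\<beta>\<bar> + 1) / (- a$e)"
    have aK: "a$e * K = - (\<bar>A0\<bar> + \<bar>\<beta>\<bar> + 1)"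
      using neg unfolding K_def by (simp add: field_simps)
    define w :: "real^'e" where "w = (\<chi> i. if i = e then c + 1 + K else c + 1)"
    have Kpos: "0 < K" using neg unfolding K_def by (intro divide_pos_pos) auto
    have "w \<in> T" using Kpos unfolding w_def T_def by auto
    then have "\<beta> \<le> inner a w" using aT by blast
    also have "inner a w = (\<Sum>i\<in>UNIV. a$i * (c + 1) + (if i = e then a$i * K else 0))"
      unfolding inner_vec_real w_def by (intro sum.cong refl) (simp add: distrib_left)
    also have "\<dots> = A0 + a$e * K"
      unfolding A0_def by (simp add: sum.distrib)
    finally show False using aK by linarith
  qed
  define s where "s = (\<Sum>e\<in>UNIV. a$e)"
  have spos: "0 < s"
  proof -
    obtain e where "a$e \<noteq> 0" using a0 by (metis vec_eq_iff zero_index)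
    then have "0 < a$e" using anonneg[of e] by linarith
    then show ?thesis unfolding s_def using anonneg by (intro sum_pos2[where i=e]) auto
  qed
  have \<beta>c: "\<beta> \<le> c * s"
  proof (rule ccontr)
    assume "\<not> \<beta> \<le> c * s"
    define \<epsilon> where "\<epsilon> = (\<beta> - c * s) / (2 * s)"
    have \<epsilon>pos: "0 < \<epsilon>" using \<open>\<not> \<beta> \<le> c * s\<close> spos unfolding \<epsilon>_def by (intro divide_pos_pos) auto
    have "(\<chi> i. c + \<epsilon>) \<in> T" using \<epsilon>pos unfolding T_def by auto
    then have "\<beta> \<le> inner a (\<chi> i. c + \<epsilon>)" using aT by blast
    also have "\<dots> = (c + \<epsilon>) * s"
      unfolding inner_vec_real s_def by (simp add: sum_distrib_left mult.commute)
    also have "\<dots> = c * s + (\<beta> - c * s) / 2"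
      using spos unfolding \<epsilon>_def by (simp add: field_simps)
    finally show False using \<open>\<not> \<beta> \<le> c * s\<close> by (simp add: field_simps)
  qed
  define f where "f = (\<lambda>e. a$e / s)"
  have f0: "\<And>e. 0 \<le> f e" unfolding f_def using anonneg spos by simp
  have f1: "(\<integral>\<^sup>+x. ennreal (f x) \<partial>count_space UNIV) = 1"
  proof -
    have "(\<integral>\<^sup>+x. ennreal (f x) \<partial>count_space UNIV) = (\<Sum>x\<in>UNIV. ennreal (f x))"
      by (rule nn_integral_count_space_finite) simp
    also have "\<dots> = ennreal (\<Sum>x\<in>UNIV. f x)" using f0 by simp
    also have "(\<Sum>x\<in>UNIV. f x) = 1"
      unfolding f_def using spos by (simp add: sum_divide_distrib[symmetric] s_def)
    finally show ?thesis by simp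
  qed
  define b where "b = embed_pmf f"
  have pb: "pmf b e = a$e / s" for e
    unfolding b_def using pmf_embed_pmf[of f, OF f0 f1] by (simp add: f_def)
  show ?thesis
  proof (intro exI allI)
    fix t
    have "(\<Sum>e\<in>UNIV. pmf b e * g t e) = inner a ((\<chi> e. g t e) :: real^'e) / s"
      unfolding pb inner_vec_real by (simp add: sum_divide_distrib)
    also have "\<dots> \<le> \<beta> / s"
      using aV spos unfolding V_def by (intro divide_right_mono) auto
    also have "\<dots> \<le> c" using \<beta>c spos by (simp add: divide_le_eq)
    finally show "(\<Sum>e\<in>UNIV. pmf b e * g t e) \<le> (SUP t. Min (range (g t)))" unfolding c_def .
  qed
qed


lemma Pr_integrable:
  fixes \<delta> :: "('q::finite, 'a::finite) trans"
  shows "integrable (measure_pmf \<tau>) (\<lambda>\<sigma>. Pr \<delta> \<sigma> q W)"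
proof (rule measure_pmf.integrable_const_bound[where B=1])
  show "AE x in measure_pmf \<tau>. norm (Pr \<delta> x q W) \<le> 1"
    using Pr_bounds[of \<delta> _ q W] by (simp add: abs_le_iff)
  show "(\<lambda>\<sigma>. Pr \<delta> \<sigma> q W) \<in> borel_measurable (measure_pmf \<tau>)" by simp
qed

lemma Pr_mixed_bounds:
  fixes \<delta> :: "('q::finite, 'a::finite) trans"
  shows "0 \<le> Pr_mixed \<delta> \<tau> q W" "Pr_mixed \<delta> \<tau> q W \<le> 1"
  unfolding Pr_mixed_def
   apply (rule integral_nonneg_AE) using Pr_bounds[of \<delta> _ q W] apply simp
  apply (rule measure_pmf.integral_le_const[OF Pr_integrable]) using Pr_bounds[of \<delta> _ q W] apply simp
  done

lemma Pr_mixed_nn: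
  fixes \<delta> :: "('q::finite, 'a::finite) trans"
  shows "ennreal (Pr_mixed \<delta> \<tau> q W) = (\<integral>\<^sup>+\<sigma>. ennreal (Pr \<delta> \<sigma> q W) \<partial>measure_pmf \<tau>)"
  unfolding Pr_mixed_def
  by (rule nn_integral_eq_integral[symmetric, OF Pr_integrable]) (simp add: Pr_bounds)

lemma Pr_mixed_return:
  fixes \<delta> :: "('q::finite, 'a::finite) trans"
  shows "Pr_mixed \<delta> (return_pmf \<sigma>) q W = Pr \<delta> \<sigma> q W"
proof -
  have "ennreal (Pr_mixed \<delta> (return_pmf \<sigma>) q W) = ennreal (Pr \<delta> \<sigma> q W)"
    unfolding Pr_mixed_nn by (rule nn_integral_return_pmf) simp
  then show ?thesis using Pr_mixed_bounds(1)[of \<delta> "return_pmf \<sigma>" q W] Pr_bounds(1)[of \<delta> \<sigma> q W]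
    by (simp only: ennreal_inj)
qed

lemma Pr_mixed_mix:
  fixes \<delta> :: "('q::finite, 'a::finite) trans"
  assumes p: "0 \<le> p" "p \<le> 1"
  shows "Pr_mixed \<delta> (bind_pmf (bernoulli_pmf p) (\<lambda>b. if b then \<tau>1 else \<tau>2)) q W
     = p * Pr_mixed \<delta> \<tau>1 q W + (1 - p) * Pr_mixed \<delta> \<tau>2 q W"
proof -
  let ?m = "bind_pmf (bernoulli_pmf p) (\<lambda>b. if b then \<tau>1 else \<tau>2)"
  let ?F = "\<lambda>\<tau>. (\<integral>\<^sup>+\<sigma>. ennreal (Pr \<delta> \<sigma> q W) \<partial>measure_pmf \<tau>)"
  have "ennreal (Pr_mixed \<delta> ?m q W) = (\<integral>\<^sup>+b. ?F (if b then \<tau>1 else \<tau>2) \<partial>measure_pmf (bernoulli_pmf p))"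
    unfolding Pr_mixed_nn by (rule nn_integral_bind_pmf)
  also have "\<dots> = (\<integral>\<^sup>+b. ennreal (if b then Pr_mixed \<delta> \<tau>1 q W else Pr_mixed \<delta> \<tau>2 q W) \<partial>measure_pmf (bernoulli_pmf p))"
    by (intro nn_integral_cong) (simp add: Pr_mixed_nn)
  also have "\<dots> = ennreal (p * Pr_mixed \<delta> \<tau>1 q W + (1 - p) * Pr_mixed \<delta> \<tau>2 q W)"
    using nn_integral_bernoulli_pmf[OF p, of "\<lambda>b. if b then Pr_mixed \<delta> \<tau>1 q W else Pr_mixed \<delta> \<tau>2 q W"]
      Pr_mixed_bounds(1)[of \<delta> \<tau>1 q W] Pr_mixed_bounds(1)[of \<delta> \<tau>2 q W] p
    by (simp add: mult.commute ennreal_mult'[symmetric] ennreal_plus[symmetric] del: ennreal_plus)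
  finally show ?thesis
    using p Pr_mixed_bounds(1)[of \<delta> ?m q W] Pr_mixed_bounds(1)[of \<delta> \<tau>1 q W] Pr_mixed_bounds(1)[of \<delta> \<tau>2 q W]
    by (subst (asm) ennreal_inj) auto
qed

lemma val_pr_strat_bounds:
  fixes \<Gamma> :: "'e::finite \<Rightarrow> ('q::finite, 'a::finite) trans"
  shows "0 \<le> val_pr_strat \<Gamma> b \<sigma> q W" "val_pr_strat \<Gamma> b \<sigma> q W \<le> 1"
proof -
  show "0 \<le> val_pr_strat \<Gamma> b \<sigma> q W"
    unfolding val_pr_strat_def by (intro sum_nonneg mult_nonneg_nonneg) (auto simp: Pr_bounds)
  have "val_pr_strat \<Gamma> b \<sigma> q W \<le> (\<Sum>e\<in>UNIV. pmf b e * 1)"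
    unfolding val_pr_strat_def by (intro sum_mono mult_left_mono) (auto simp: Pr_bounds)
  then show "val_pr_strat \<Gamma> b \<sigma> q W \<le> 1" by (simp add: sum_pmf_UNIV)
qed

lemma val_pr_mixed_bounds:
  fixes \<Gamma> :: "'e::finite \<Rightarrow> ('q::finite, 'a::finite) trans"
  shows "0 \<le> val_pr_mixed \<Gamma> b \<tau> q W" "val_pr_mixed \<Gamma> b \<tau> q W \<le> 1"
proof -
  show "0 \<le> val_pr_mixed \<Gamma> b \<tau> q W"
    unfolding val_pr_mixed_def by (intro sum_nonneg mult_nonneg_nonneg) (auto simp: Pr_mixed_bounds)
  have "val_pr_mixed \<Gamma> b \<tau> q W \<le> (\<Sum>e\<in>UNIV. pmf b e * 1)"
    unfolding val_pr_mixed_def by (intro sum_mono mult_left_mono) (auto simp: Pr_mixed_bounds)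
  then show "val_pr_mixed \<Gamma> b \<tau> q W \<le> 1" by (simp add: sum_pmf_UNIV)
qed

lemma val_pr_mixed_le:
  fixes \<Gamma> :: "'e::finite \<Rightarrow> ('q::finite, 'a::finite) trans"
  shows "val_pr_mixed \<Gamma> b \<tau> q W \<le> val_pr \<Gamma> b q W"
proof -
  have bdd: "bdd_above (range (\<lambda>\<sigma>. val_pr_strat \<Gamma> b \<sigma> q W))"
    by (rule bdd_aboveI2[where M=1]) (rule val_pr_strat_bounds)
  have int: "integrable (measure_pmf \<tau>) (\<lambda>\<sigma>. pmf b e * Pr (\<Gamma> e) \<sigma> q W)" for e
    by (rule integrable_mult_right) (rule Pr_integrable)
  have "val_pr_mixed \<Gamma> b \<tau> q W = (\<Sum>e\<in>UNIV. measure_pmf.expectation \<tau> (\<lambda>\<sigma>. pmf b e * Pr (\<Gamma> e) \<sigma> q W))"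
    unfolding val_pr_mixed_def Pr_mixed_def by simp
  also have "\<dots> = measure_pmf.expectation \<tau> (\<lambda>\<sigma>. val_pr_strat \<Gamma> b \<sigma> q W)"
    unfolding val_pr_strat_def by (rule Bochner_Integration.integral_sum[symmetric]) (rule int)
  also have "\<dots> \<le> val_pr \<Gamma> b q W"
    unfolding val_pr_def
  proof (rule measure_pmf.integral_le_const)
    show "integrable (measure_pmf \<tau>) (\<lambda>\<sigma>. val_pr_strat \<Gamma> b \<sigma> q W)"
      unfolding val_pr_strat_def by (intro Bochner_Integration.integrable_sum int)
    show "AE x in measure_pmf \<tau>. val_pr_strat \<Gamma> b x q W \<le> (SUP \<sigma>. val_pr_strat \<Gamma> b \<sigma> q W)"
      using cSUP_upper[OF _ bdd] by simp
  qed
  finally show ?thesis .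
qed

lemma val_pr_eq:
  fixes \<Gamma> :: "'e::finite \<Rightarrow> ('q::finite, 'a::finite) trans"
  shows "val_pr \<Gamma> b q W = (SUP \<tau>. val_pr_mixed \<Gamma> b \<tau> q W)"
proof (rule antisym)
  have bdd: "bdd_above (range (\<lambda>\<tau>. val_pr_mixed \<Gamma> b \<tau> q W))"
    by (rule bdd_aboveI2[where M=1]) (rule val_pr_mixed_bounds)
  show "val_pr \<Gamma> b q W \<le> (SUP \<tau>. val_pr_mixed \<Gamma> b \<tau> q W)"
    unfolding val_pr_def
  proof (rule cSUP_least)
    fix \<sigma>
    have "val_pr_strat \<Gamma> b \<sigma> q W = val_pr_mixed \<Gamma> b (return_pmf \<sigma>) q W"
      unfolding val_pr_strat_def val_pr_mixed_def by (simp add: Pr_mixed_return)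
    also have "\<dots> \<le> (SUP \<tau>. val_pr_mixed \<Gamma> b \<tau> q W)"
      by (rule cSUP_upper[OF _ bdd]) simp
    finally show "val_pr_strat \<Gamma> b \<sigma> q W \<le> (SUP \<tau>. val_pr_mixed \<Gamma> b \<tau> q W)" .
  qed simp
  show "(SUP \<tau>. val_pr_mixed \<Gamma> b \<tau> q W) \<le> val_pr \<Gamma> b q W"
    by (rule cSUP_least) (simp_all add: val_pr_mixed_le)
qed

theorem mainTheorem6:
  fixes \<Gamma> :: "'e::finite \<Rightarrow> 'q::finite \<Rightarrow> 'a::finite \<Rightarrow> 'q pmf"
    and q :: 'q and f :: "'q \<Rightarrow> nat"
  shows "(SUP \<tau>. INF b. val_pr_mixed \<Gamma> b \<tau> q (parity_obj f))
           = (INF b. SUP \<tau>. val_pr_mixed \<Gamma> b \<tau> q (parity_obj f))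
         \<and> (SUP \<tau>. val_uni_mixed \<Gamma> \<tau> q (parity_obj f)) = (INF b. val_pr \<Gamma> b q (parity_obj f))"
proof -
  define W where "W = parity_obj f"
  define g where "g = (\<lambda>\<tau> e. Pr_mixed (\<Gamma> e) \<tau> q W)"
  define c where "c = (SUP \<tau>. Min (range (g \<tau>)))"
  have vpm: "val_pr_mixed \<Gamma> b \<tau> q W = (\<Sum>e\<in>UNIV. pmf b e * g \<tau> e)" for b \<tau>
    unfolding val_pr_mixed_def g_def by simp
  have g0: "\<And>t e. 0 \<le> g t e" and g1: "\<And>t e. g t e \<le> 1"
    unfolding g_def by (rule Pr_mixed_bounds)+
  have mix: "\<exists>t. \<forall>e. g t e = p * g t1 e + (1-p) * g t2 e" if "0 \<le> p" "p \<le> 1" for t1 t2 p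
    unfolding g_def using Pr_mixed_mix[OF that] by blast
  have L1: "(SUP \<tau>. INF b. val_pr_mixed \<Gamma> b \<tau> q W) = c"
    unfolding vpm c_def inf_b_min ..
  have R1: "(INF b. SUP \<tau>. val_pr_mixed \<Gamma> b \<tau> q W) = c"
  proof (rule antisym)
    have bddS: "bdd_above (range (\<lambda>\<tau>. val_pr_mixed \<Gamma> b \<tau> q W))" for b
      by (rule bdd_aboveI2[where M=1]) (rule val_pr_mixed_bounds)
    have bddB: "bdd_below (range (\<lambda>b. SUP \<tau>. val_pr_mixed \<Gamma> b \<tau> q W))"
    proof (rule bdd_belowI2[where m=0])
      fix b
      have "0 \<le> val_pr_mixed \<Gamma> b undefined q W" by (rule val_pr_mixed_bounds)
      also have "\<dots> \<le> (SUP \<tau>. val_pr_mixed \<Gamma> b \<tau> q W)" by (rule cSUP_upper[OF _ bddS]) simp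
      finally show "0 \<le> (SUP \<tau>. val_pr_mixed \<Gamma> b \<tau> q W)" .
    qed
    obtain b0 where b0: "\<forall>t. (\<Sum>e\<in>UNIV. pmf b0 e * g t e) \<le> c"
      using minimax_hard[of g, OF g0 g1 mix] unfolding c_def by blast
    have "(INF b. SUP \<tau>. val_pr_mixed \<Gamma> b \<tau> q W) \<le> (SUP \<tau>. val_pr_mixed \<Gamma> b0 \<tau> q W)"
      by (rule cINF_lower[OF bddB]) simp
    also have "\<dots> \<le> c"
      by (rule cSUP_least) (simp_all add: vpm b0)
    finally show "(INF b. SUP \<tau>. val_pr_mixed \<Gamma> b \<tau> q W) \<le> c" .
    show "c \<le> (INF b. SUP \<tau>. val_pr_mixed \<Gamma> b \<tau> q W)"
    proof (rule cINF_greatest)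
      fix b
      show "c \<le> (SUP \<tau>. val_pr_mixed \<Gamma> b \<tau> q W)"
        unfolding c_def
      proof (rule cSUP_least)
        fix \<tau>
        have "Min (range (g \<tau>)) \<le> val_pr_mixed \<Gamma> b \<tau> q W"
          unfolding vpm by (rule sum_ge_min)
        also have "\<dots> \<le> (SUP \<tau>. val_pr_mixed \<Gamma> b \<tau> q W)" by (rule cSUP_upper[OF _ bddS]) simp
        finally show "Min (range (g \<tau>)) \<le> (SUP \<tau>. val_pr_mixed \<Gamma> b \<tau> q W)" .
      qed simp
    qed simp
  qed
  have U: "(SUP \<tau>. val_uni_mixed \<Gamma> \<tau> q W) = c"
    unfolding val_uni_mixed_def c_def g_def ..
  have V: "(INF b. val_pr \<Gamma> b q W) = (INF b. SUP \<tau>. val_pr_mixed \<Gamma> b \<tau> q W)"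
    by (simp add: val_pr_eq)
  show ?thesis using L1 R1 U V unfolding W_def by simp
qed

end
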